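(* Let $X$ be a topological space and $x\in X$ a point such that $\overline{U}=X$ for every open neighborhood $U$ of $x$. If $M$ is a maximal finitely non-Hausdorff subset of $X$, then $x\in M$.
   Context: A non-empty subset $A$ of $X$ is finitely non-Hausdorff if for every non-empty finite $F\subseteq A$ and every family $\{U_y:y\in F\}$ of open neighborhoods $U_y$ of $y$, $\bigcap_{y\in F}U_y\neq\emptyset$; it is maximal finitely non-Hausdorff if no finitely non-Hausdorff subset of $X$ properly contains it. *)

theory Defs
  imports "HOL-Analysis.Analysis"
begin

definition finitely_non_hausdorff :: "'a topology \<Rightarrow> 'a set \<Rightarrow> bool" where
  "finitely_non_hausdorff X A \<longleftrightarrow>
     A \<noteq> {} \<and> A \<subseteq> topspace X \<and>
     (\<forall>F U. finite F \<and> F \<noteq> {} \<and> F \<subseteq> A \<and>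
            (\<forall>y\<in>F. openin X (U y) \<and> y \<in> U y) \<longrightarrow> (\<Inter>y\<in>F. U y) \<noteq> {})"

definition maximal_finitely_non_hausdorff :: "'a topology \<Rightarrow> 'a set \<Rightarrow> bool" where
  "maximal_finitely_non_hausdorff X M \<longleftrightarrow>
     finitely_non_hausdorff X M \<and>
     (\<forall>B. finitely_non_hausdorff X B \<and> M \<subseteq> B \<longrightarrow> B = M)"

end

theory Submission
  imports Defs
begin

theorem lemma2p20:
  fixes X :: "'a topology" and x :: 'a and M :: "'a set"
  assumes "x \<in> topspace X"
    and "\<And>U. openin X U \<Longrightarrow> x \<in> U \<Longrightarrow> X closure_of U = topspace X"
    and "maximal_finitely_non_hausdorff X M"
  shows "x \<in> M"
proof -
  have fM: "finitely_non_hausdorff X M" and mx: "\<And>B. finitely_non_hausdorff X B \<Longrightarrow> M \<subseteq> B \<Longrightarrow> B = M"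
    using assms(3) unfolding maximal_finitely_non_hausdorff_def by simp_all
  have "finitely_non_hausdorff X (insert x M)"
    unfolding finitely_non_hausdorff_def
  proof (intro conjI allI impI)
    show "insert x M \<noteq> {}" by simp
    show "insert x M \<subseteq> topspace X" using fM assms(1) unfolding finitely_non_hausdorff_def by auto
  next
    fix F U
    assume h: "finite F \<and> F \<noteq> {} \<and> F \<subseteq> insert x M \<and> (\<forall>y\<in>F. openin X (U y) \<and> y \<in> U y)"
    show "(\<Inter>y\<in>F. U y) \<noteq> {}"
    proof (cases "x \<in> F")
      case False
      then have "F \<subseteq> M" using h by auto
      then show ?thesis using fM h unfolding finitely_non_hausdorff_def by simp
    next
      case True
      show ?thesis
      proof (cases "F - {x} = {}")
        case True
        then have "F = {x}" using h by auto
        then show ?thesis using h by auto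
      next
        case False
        let ?F = "F - {x}"
        have ne: "(\<Inter>y\<in>?F. U y) \<noteq> {}"
        proof -
          have "finite ?F" "?F \<subseteq> M" "\<forall>y\<in>?F. openin X (U y) \<and> y \<in> U y" using h by auto
          then show ?thesis using fM False unfolding finitely_non_hausdorff_def by simp
        qed
        have op: "openin X (\<Inter>y\<in>?F. U y)"
          using h False by (intro openin_INT2) auto
        have dense: "X closure_of U x = topspace X" using h True assms(2) by simp
        have "(\<Inter>y\<in>?F. U y) \<inter> X closure_of U x \<noteq> {}"
          using dense ne openin_subset[OF op] by auto
        then have "(\<Inter>y\<in>?F. U y) \<inter> U x \<noteq> {}"
          using openin_Int_closure_of_eq_empty[OF op] by simp
        moreover have "(\<Inter>y\<in>F. U y) = (\<Inter>y\<in>?F. U y) \<inter> U x" using True by auto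
        ultimately show ?thesis by simp
      qed
    qed
  qed
  then have "insert x M = M" using mx by auto
  then show ?thesis by blast
qed

end
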